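(* Let $X$ be a metrizable space and $A\subset X$. Then the discretization $X_A$ of $X$ by $A$ has a regular base at non-isolated points.
   Context: The discretization $X_A$ is the set $X$ with the topology generated by the base $\{U: U \text{ open in } X\}\cup\{\{x\}:x\in A\}$. A base $\mathcal{B}$ is regular at $x$ if for every neighborhood $U$ of $x$ there is an open $V$ with $x\in V\subset U$ such that $\{B\in\mathcal{B}: B\cap V\neq\emptyset,\ B\not\subset U\}$ is finite; a regular base at non-isolated points is regular at every non-isolated point. *)

theory Defs
  imports "HOL-Analysis.Analysis"
begin

definition discretization :: "'a topology \<Rightarrow> 'a set \<Rightarrow> 'a topology" where
  "discretization X A =
     topology_generated_by ({U. openin X U} \<union> {{x} | x. x \<in> A})"

definition is_base :: "'a topology \<Rightarrow> 'a set set \<Rightarrow> bool" where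
  "is_base T \<B> \<longleftrightarrow> (\<forall>B\<in>\<B>. openin T B) \<and>
     (\<forall>U. openin T U \<longrightarrow> (\<forall>x\<in>U. \<exists>B\<in>\<B>. x \<in> B \<and> B \<subseteq> U))"

definition regular_at :: "'a topology \<Rightarrow> 'a set set \<Rightarrow> 'a \<Rightarrow> bool" where
  "regular_at T \<B> x \<longleftrightarrow>
     (\<forall>U. (\<exists>W. openin T W \<and> x \<in> W \<and> W \<subseteq> U) \<longrightarrow>
        (\<exists>V. openin T V \<and> x \<in> V \<and> V \<subseteq> U \<and>
             finite {B\<in>\<B>. B \<inter> V \<noteq> {} \<and> \<not> B \<subseteq> U}))"

definition isolated_point :: "'a topology \<Rightarrow> 'a \<Rightarrow> bool" where
  "isolated_point T x \<longleftrightarrow> x \<in> topspace T \<and> openin T {x}"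

definition has_regular_base_at_nonisolated :: "'a topology \<Rightarrow> bool" where
  "has_regular_base_at_nonisolated T \<longleftrightarrow>
     (\<exists>\<B>. is_base T \<B> \<and>
        (\<forall>x\<in>topspace T. \<not> isolated_point T x \<longrightarrow> regular_at T \<B> x))"

end

theory Submission
  imports Defs
begin

lemma ex_wf_total: "\<exists>R::'a rel. wf R \<and> (\<forall>p q. p \<noteq> q \<longrightarrow> (p,q)\<in>R \<or> (q,p)\<in>R)"
proof -
  obtain r :: "'a rel" where wo: "Well_order r" and univ: "Field r = UNIV"
    using well_ordering [where 'a = "'a"] by blast
  then have "wf (r - Id)" "Total r" by (simp_all add: order_on_defs)
  then show ?thesis using univ
    by (intro exI[of _ "r - Id"]) (auto simp: total_on_def)
qed

lemma half_pow_small: "(r::real) > 0 \<Longrightarrow> \<exists>n. (1/2::real)^n < r"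
  by (rule real_arch_pow_inv) auto

lemma disc_topspace:
  assumes "A \<subseteq> topspace X"
  shows "topspace (discretization X A) = topspace X"
  using assms unfolding discretization_def by (auto dest: openin_subset)

lemma disc_open:
  assumes "A \<subseteq> topspace X"
  shows "openin (discretization X A) S \<longleftrightarrow>
     S \<subseteq> topspace X \<and> (\<forall>x\<in>S. x \<in> A \<or> (\<exists>W. openin X W \<and> x \<in> W \<and> W \<subseteq> S))"
proof
  assume H: "openin (discretization X A) S"
  then have "S \<subseteq> topspace X" using openin_subset[of "discretization X A" S] disc_topspace[OF assms] by simp
  have G: "generate_topology_on ({U. openin X U} \<union> {{x} | x. x \<in> A}) S"
    using H unfolding discretization_def by (rule openin_topology_generated_by)
  from G have "\<forall>x\<in>S. x \<in> A \<or> (\<exists>W. openin X W \<and> x \<in> W \<and> W \<subseteq> S)"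
  proof induction
    case Empty
    then show ?case by simp
  next
    case (Int a b)
    show ?case
    proof
      fix x assume "x \<in> a \<inter> b"
      show "x \<in> A \<or> (\<exists>W. openin X W \<and> x \<in> W \<and> W \<subseteq> a \<inter> b)"
      proof (cases "x \<in> A")
        case True
        then show ?thesis by (rule disjI1)
      next
        case False
        have xa: "x \<in> a" and xb: "x \<in> b" using \<open>x \<in> a \<inter> b\<close> by auto
        have "x \<in> A \<or> (\<exists>W. openin X W \<and> x \<in> W \<and> W \<subseteq> a)" using Int.IH(1) xa by (rule bspec)
        then obtain W1 where W1: "openin X W1" "x \<in> W1" "W1 \<subseteq> a" using False by blast
        have "x \<in> A \<or> (\<exists>W. openin X W \<and> x \<in> W \<and> W \<subseteq> b)" using Int.IH(2) xb by (rule bspec)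
        then obtain W2 where W2: "openin X W2" "x \<in> W2" "W2 \<subseteq> b" using False by blast
        have "openin X (W1 \<inter> W2)" using W1(1) W2(1) by (rule openin_Int)
        moreover have "x \<in> W1 \<inter> W2" using W1(2) W2(2) by (rule IntI)
        moreover have "W1 \<inter> W2 \<subseteq> a \<inter> b" using W1(3) W2(3) by (rule Int_mono)
        ultimately show ?thesis by blast
      qed
    qed
  next
    case (UN K)
    show ?case
    proof
      fix x assume "x \<in> \<Union>K"
      then obtain k where k: "k \<in> K" "x \<in> k" by blast
      then have "x \<in> A \<or> (\<exists>W. openin X W \<and> x \<in> W \<and> W \<subseteq> k)" using UN.IH by blast
      moreover have "k \<subseteq> \<Union>K" using k by blast
      ultimately show "x \<in> A \<or> (\<exists>W. openin X W \<and> x \<in> W \<and> W \<subseteq> \<Union>K)" by blast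
    qed
  next
    case (Basis s)
    then have "openin X s \<or> (\<exists>a. s = {a} \<and> a \<in> A)" by blast
    then show ?case
    proof
      assume "openin X s" then show ?thesis by blast
    next
      assume "\<exists>a. s = {a} \<and> a \<in> A" then show ?thesis by blast
    qed
  qed
  show "S \<subseteq> topspace X \<and> (\<forall>x\<in>S. x \<in> A \<or> (\<exists>W. openin X W \<and> x \<in> W \<and> W \<subseteq> S))"
    using \<open>S \<subseteq> topspace X\<close> \<open>\<forall>x\<in>S. x \<in> A \<or> (\<exists>W. openin X W \<and> x \<in> W \<and> W \<subseteq> S)\<close> by (rule conjI)
next
  assume H: "S \<subseteq> topspace X \<and> (\<forall>x\<in>S. x \<in> A \<or> (\<exists>W. openin X W \<and> x \<in> W \<and> W \<subseteq> S))"
  have b1: "openin (discretization X A) W" if "openin X W" for W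
    using that unfolding discretization_def by (intro topology_generated_by_Basis) auto
  have b2: "openin (discretization X A) {a}" if "a \<in> A" for a
    using that unfolding discretization_def by (intro topology_generated_by_Basis) auto
  show "openin (discretization X A) S"
  proof (rule openin_subopen[THEN iffD2], rule ballI)
    fix x assume "x \<in> S"
    then show "\<exists>T. openin (discretization X A) T \<and> x \<in> T \<and> T \<subseteq> S"
    proof (cases "x \<in> A")
      case True
      then show ?thesis using b2 \<open>x \<in> S\<close> by blast
    next
      case False
      then show ?thesis using H b1 \<open>x \<in> S\<close> by blast
    qed
  qed
qed


lemma finite_at_most_one: "(\<And>a b. a \<in> S \<Longrightarrow> b \<in> S \<Longrightarrow> a = b) \<Longrightarrow> finite S"
  by (metis finite.simps is_singletonI' is_singleton_def)

context Metric_space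
begin

lemma lf_cover:
  assumes epos: "\<epsilon> > 0"
  shows "\<exists>\<W>. (\<forall>W\<in>\<W>. openin mtopology W \<and> (\<exists>p\<in>M. W \<subseteq> mball p \<epsilon>)) \<and> M \<subseteq> \<Union>\<W> \<and>
     (\<forall>x\<in>M. \<exists>N. openin mtopology N \<and> x \<in> N \<and> finite {W\<in>\<W>. W \<inter> N \<noteq> {}})"
proof -
  obtain R :: "'a rel" where R: "wf R \<and> (\<forall>p q. p \<noteq> q \<longrightarrow> (p,q)\<in>R \<or> (q,p)\<in>R)"
    using ex_wf_total by (elim exE)
  have wfR: "wf R" using R by (rule conjunct1)
  have tot: "(p,q)\<in>R \<or> (q,p)\<in>R" if "p \<noteq> q" for p q using R that by simp
  define \<delta> :: "nat \<Rightarrow> real" where "\<delta> n = (1/2)^n" for n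
  define lp where "lp c p \<longleftrightarrow> c \<in> mball p \<epsilon> \<and> (\<forall>q. (q,p)\<in>R \<longrightarrow> c \<notin> mball q \<epsilon>)" for c p
  define C where "C n p S = {c. lp c p \<and> c \<notin> S \<and> mball c (3*\<delta> n) \<subseteq> mball p \<epsilon>}" for n p S
  define Vf where "Vf n p S = (\<Union>c\<in>C n p S. mball c (\<delta> n))" for n p S
  define cov where "cov = rec_nat {} (\<lambda>n S. S \<union> (\<Union>p. Vf n p S))"
  define V where "V n p = Vf n p (cov n)" for n p
  have cov0: "cov 0 = {}" and covS: "cov (Suc n) = cov n \<union> (\<Union>p. V n p)" for n
    by (simp_all add: cov_def V_def)
  have cov_eq: "cov n = (\<Union>j<n. \<Union>p. V j p)" for n
  proof (induction n)
    case 0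
    then show ?case by (simp add: cov0)
  next
    case (Suc n)
    have "cov (Suc n) = (\<Union>j<n. \<Union>p. V j p) \<union> (\<Union>p. V n p)" by (simp only: covS Suc.IH)
    also have "\<dots> = (\<Union>j<Suc n. \<Union>p. V j p)" by (simp add: lessThan_Suc Un_commute)
    finally show ?case .
  qed
  have Vsub: "V j q \<subseteq> cov i" if "j < i" for i j q
  proof -
    have "V j q \<subseteq> (\<Union>j<i. \<Union>p. V j p)" using that by blast
    then show ?thesis by (simp only: cov_eq[of i])
  qed
  have dpos: "\<delta> n > 0" for n by (simp add: \<delta>_def)
  have dSuc: "\<delta> (Suc n) = \<delta> n / 2" for n by (simp add: \<delta>_def)
  have dmono: "\<delta> j \<le> \<delta> i" if "i \<le> j" for i j
    unfolding \<delta>_def using that by (simp add: power_decreasing)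
  have dsmall: "\<exists>n. \<delta> n < r" if "r > 0" for r
    unfolding \<delta>_def using half_pow_small that by blast
  have V_ball: "V n p \<subseteq> mball p \<epsilon>" for n p
  proof
    fix y assume "y \<in> V n p"
    then obtain c where c: "c \<in> C n p (cov n)" "y \<in> mball c (\<delta> n)"
      unfolding V_def Vf_def by blast
    then have "y \<in> mball c (3*\<delta> n)" using dpos[of n] by auto
    then show "y \<in> mball p \<epsilon>" using c unfolding C_def by blast
  qed
  have V_open: "openin mtopology (V n p)" for n p
    unfolding V_def Vf_def by (rule openin_Union) auto
  have lp_unique: "p = q" if "lp c p" "lp c q" for c p q
  proof (rule ccontr)
    assume "p \<noteq> q"
    then have "(p,q)\<in>R \<or> (q,p)\<in>R" by (rule tot)
    then show False using that unfolding lp_def by blast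
  qed
  have lp_ex: "\<exists>p. lp c p" if "c \<in> M" for c
  proof -
    have cQ: "c \<in> {p. c \<in> mball p \<epsilon>}" using that epos by simp
    obtain z where z: "z \<in> {p. c \<in> mball p \<epsilon>}" "\<And>y. (y, z) \<in> R \<Longrightarrow> y \<notin> {p. c \<in> mball p \<epsilon>}"
      by (rule wfE_min[OF wfR cQ]) blast
    then have "lp c z" unfolding lp_def by simp
    then show ?thesis by (rule exI)
  qed
  define \<W> where "\<W> = {V n p | n p. p \<in> M}"
  have W_props: "\<forall>W\<in>\<W>. openin mtopology W \<and> (\<exists>p\<in>M. W \<subseteq> mball p \<epsilon>)"
    unfolding \<W>_def using V_open V_ball by blast
  have cover: "\<exists>n p. x \<in> V n p" if xM0: "x \<in> M" for x
  proof -
    obtain p where p: "lp x p" using lp_ex[OF xM0] by (elim exE)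
    then have pM: "p \<in> M" and dpx: "d p x < \<epsilon>" unfolding lp_def by auto
    obtain n where n: "\<delta> n < (\<epsilon> - d p x) / 3" using dsmall[of "(\<epsilon> - d p x) / 3"] dpx by auto
    have sub: "mball x (3*\<delta> n) \<subseteq> mball p \<epsilon>"
    proof
      fix y assume "y \<in> mball x (3*\<delta> n)"
      then have "y \<in> M" "d x y < 3*\<delta> n" by auto
      moreover have "d p y \<le> d p x + d x y" using triangle[of p x y] pM xM0 \<open>y \<in> M\<close> by simp
      ultimately show "y \<in> mball p \<epsilon>" using pM n by auto
    qed
    show ?thesis
    proof (cases "x \<in> cov n")
      case True
      then have "x \<in> (\<Union>j<n. \<Union>p. V j p)" using cov_eq[of n] by simp
      then show ?thesis by blast
    next
      case False
      then have "x \<in> C n p (cov n)" using p sub unfolding C_def by blast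
      moreover have "x \<in> mball x (\<delta> n)" using xM0 dpos[of n] by simp
      ultimately show ?thesis unfolding V_def Vf_def by blast
    qed
  qed
  have cov_M: "M \<subseteq> \<Union>\<W>"
  proof
    fix x assume "x \<in> M"
    then obtain n p where "x \<in> V n p" using cover by (meson exE)
    moreover from this have "p \<in> M" using V_ball[of n p] by auto
    ultimately show "x \<in> \<Union>\<W>" unfolding \<W>_def by blast
  qed
  have lf: "\<exists>N. openin mtopology N \<and> x \<in> N \<and> finite {W\<in>\<W>. W \<inter> N \<noteq> {}}" if xM: "x \<in> M" for x
  proof -
    obtain n p where xV: "x \<in> V n p" using cover[OF xM] by (elim exE)
    have "\<exists>r>0. mball x r \<subseteq> V n p"
      using V_open[of n p] xV unfolding openin_mtopology by blast
    then obtain \<rho> where rho: "\<rho> > 0" "mball x \<rho> \<subseteq> V n p" by (elim exE conjE)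
    obtain k where k: "\<delta> k < \<rho>" using dsmall[OF rho(1)] by (elim exE)
    define N where "N = mball x (\<delta> (n+k+1))"
    have d2: "2 * \<delta> (n+k+1) \<le> \<delta> i" if "i \<le> n+k" for i
      using dSuc[of "n+k"] dmono[OF that] by simp
    have claim1: "i \<le> n+k" if hV: "V i q \<inter> N \<noteq> {}" for i q
    proof (rule ccontr)
      assume "\<not> i \<le> n+k"
      then have i: "n+k+1 \<le> i" "n < i" by auto
      obtain y where y: "y \<in> V i q" "y \<in> N" using hV by blast
      then obtain c where c: "c \<in> C i q (cov i)" "y \<in> mball c (\<delta> i)"
        unfolding V_def Vf_def by blast
      have "c \<notin> cov i" using c unfolding C_def by blast
      then have "c \<notin> mball x \<rho>" using Vsub[OF i(2)] rho by blast
      moreover have cM: "c \<in> M" "y \<in> M" using c by auto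
      ultimately have "d x c \<ge> \<rho>" using xM by auto
      moreover have "d x c \<le> d x y + d y c" using triangle[of x y c] xM cM by simp
      moreover have "d x y < \<delta> (n+k+1)" using y N_def by auto
      moreover have "d y c < \<delta> i" using c commute[of y c] by simp
      moreover have "\<delta> i \<le> \<delta> (n+k+1)" using dmono[OF i(1)] .
      moreover have "2 * \<delta> (n+k+1) \<le> \<delta> k" using d2[of k] by simp
      ultimately show False using k by linarith
    qed
    have claim2: "False" if h1: "V i q1 \<inter> N \<noteq> {}" and h2: "V i q2 \<inter> N \<noteq> {}" and h3: "(q1,q2) \<in> R" for i q1 q2
    proof -
      have i: "i \<le> n+k" using claim1[OF h1] .
      obtain y1 where y1: "y1 \<in> V i q1" "y1 \<in> N" using h1 by blast
      then obtain c1 where c1: "c1 \<in> C i q1 (cov i)" "y1 \<in> mball c1 (\<delta> i)"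
        unfolding V_def Vf_def by blast
      obtain y2 where y2: "y2 \<in> V i q2" "y2 \<in> N" using h2 by blast
      then obtain c2 where c2: "c2 \<in> C i q2 (cov i)" "y2 \<in> mball c2 (\<delta> i)"
        unfolding V_def Vf_def by blast
      have "c2 \<notin> mball q1 \<epsilon>" using c2 h3 unfolding C_def lp_def by blast
      then have "c2 \<notin> mball c1 (3*\<delta> i)" using c1 unfolding C_def by blast
      moreover have M: "c1 \<in> M" "c2 \<in> M" "y1 \<in> M" "y2 \<in> M" using c1 c2 by auto
      ultimately have "d c1 c2 \<ge> 3*\<delta> i" by auto
      moreover have "d c1 c2 \<le> d c1 y1 + d y1 x + d x y2 + d y2 c2"
        using triangle[of c1 y1 c2] triangle[of y1 x c2] triangle[of x y2 c2] M xM by linarith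
      moreover have "d c1 y1 < \<delta> i" using c1 by simp
      moreover have "d y2 c2 < \<delta> i" using c2 commute[of y2 c2] by simp
      moreover have "d y1 x < \<delta> (n+k+1)" using y1 N_def commute[of y1 x] by simp
      moreover have "d x y2 < \<delta> (n+k+1)" using y2 N_def by simp
      ultimately show False using d2[OF i] by linarith
    qed
    have fin_i: "finite {V i q | q. V i q \<inter> N \<noteq> {}}" for i
    proof (rule finite_at_most_one)
      fix a b assume "a \<in> {V i q | q. V i q \<inter> N \<noteq> {}}" "b \<in> {V i q | q. V i q \<inter> N \<noteq> {}}"
      then obtain q1 q2 where "a = V i q1" "b = V i q2" "V i q1 \<inter> N \<noteq> {}" "V i q2 \<inter> N \<noteq> {}"
        by blast
      then show "a = b" using claim2 tot by metis
    qed
    have "{W\<in>\<W>. W \<inter> N \<noteq> {}} \<subseteq> (\<Union>i\<in>{..n+k}. {V i q | q. V i q \<inter> N \<noteq> {}})"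
      unfolding \<W>_def using claim1 by fastforce
    moreover have "finite (\<Union>i\<in>{..n+k}. {V i q | q. V i q \<inter> N \<noteq> {}})"
      using fin_i by blast
    ultimately have "finite {W\<in>\<W>. W \<inter> N \<noteq> {}}" by (rule finite_subset)
    moreover have "x \<in> N" using xM dpos unfolding N_def by simp
    ultimately show ?thesis unfolding N_def by blast
  qed
  show ?thesis using W_props cov_M lf by blast
qed


lemma main_disc:
  assumes AM: "A \<subseteq> M"
  shows "has_regular_base_at_nonisolated (discretization mtopology A)"
proof -
  let ?T = "discretization mtopology A"
  have A': "A \<subseteq> topspace mtopology" using AM by simp
  have topT: "topspace ?T = M" using disc_topspace[OF A'] by simp
  have opT: "openin ?T S \<longleftrightarrow> S \<subseteq> M \<and> (\<forall>x\<in>S. x \<in> A \<or> (\<exists>W. openin mtopology W \<and> x \<in> W \<and> W \<subseteq> S))" for S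
    using disc_open[OF A', of S] by simp
  have opX: "openin ?T W" if "openin mtopology W" for W
  proof -
    have "W \<subseteq> M" using openin_subset[OF that] by simp
    then show ?thesis unfolding opT using that by blast
  qed
  have opA: "openin ?T {a}" if "a \<in> A" for a
    unfolding opT using that AM by blast
  have "\<forall>m. \<exists>\<W>. (\<forall>W\<in>\<W>. openin mtopology W \<and> (\<exists>p\<in>M. W \<subseteq> mball p ((1/2)^m))) \<and> M \<subseteq> \<Union>\<W> \<and>
     (\<forall>x\<in>M. \<exists>N. openin mtopology N \<and> x \<in> N \<and> finite {W\<in>\<W>. W \<inter> N \<noteq> {}})"
    by (intro allI lf_cover) simp
  then obtain F where F0: "\<forall>m. (\<forall>W\<in>F m. openin mtopology W \<and> (\<exists>p\<in>M. W \<subseteq> mball p ((1/2)^m))) \<and> M \<subseteq> \<Union>(F m) \<and>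
     (\<forall>x\<in>M. \<exists>N. openin mtopology N \<and> x \<in> N \<and> finite {W\<in>F m. W \<inter> N \<noteq> {}})"
    by (rule choice[THEN exE])
  have F: "(\<forall>W\<in>F m. openin mtopology W \<and> (\<exists>p\<in>M. W \<subseteq> mball p ((1/2)^m))) \<and> M \<subseteq> \<Union>(F m) \<and>
     (\<forall>x\<in>M. \<exists>N. openin mtopology N \<and> x \<in> N \<and> finite {W\<in>F m. W \<inter> N \<noteq> {}})" for m
    using F0 by (rule spec)
  have Fopen: "openin mtopology W" if "W \<in> F m" for W m using F[of m] that by blast
  have Fball: "\<exists>p\<in>M. W \<subseteq> mball p ((1/2)^m)" if "W \<in> F m" for W m using F[of m] that by blast
  have Fcov: "\<exists>W\<in>F m. x \<in> W" if "x \<in> M" for x m using F[of m] that by blast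
  have Flf: "\<exists>N. openin mtopology N \<and> x \<in> N \<and> finite {W\<in>F m. W \<inter> N \<noteq> {}}" if "x \<in> M" for x m
    using F[of m] that by blast
  define \<B> where "\<B> = (\<Union>m. F m) \<union> {{a} | a. a \<in> A}"
  have small: "W \<subseteq> mball x r" if W: "W \<in> F m" "y \<in> W" "x \<in> M" "d x y < r - 2*(1/2)^m" for W m x y r
  proof
    fix z assume z: "z \<in> W"
    obtain p where p: "p \<in> M" "W \<subseteq> mball p ((1/2)^m)" using Fball[OF W(1)] by (elim bexE)
    have "y \<in> mball p ((1/2)^m)" "z \<in> mball p ((1/2)^m)" using p W(2) z by auto
    then have yM: "y \<in> M" and zM: "z \<in> M" and "d p y < (1/2)^m" "d p z < (1/2)^m" by auto
    moreover have "d x z \<le> d x y + d y z" using triangle[of x y z] W(3) yM zM by simp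
    moreover have "d y z \<le> d y p + d p z" using triangle[of y p z] p(1) yM zM by simp
    moreover have "d y p = d p y" by (rule commute)
    ultimately have "d x z < r" using W(4) by linarith
    then show "z \<in> mball x r" using W(3) zM by simp
  qed
  have base: "is_base ?T \<B>"
    unfolding is_base_def
  proof (intro conjI allI impI ballI)
    fix B assume "B \<in> \<B>"
    then show "openin ?T B" unfolding \<B>_def using Fopen opX opA by blast
  next
    fix U x assume U: "openin ?T U" and xU: "x \<in> U"
    have UM: "U \<subseteq> M" and Ux: "x \<in> A \<or> (\<exists>W. openin mtopology W \<and> x \<in> W \<and> W \<subseteq> U)"
      using U xU unfolding opT by auto
    show "\<exists>B\<in>\<B>. x \<in> B \<and> B \<subseteq> U"
    proof (cases "x \<in> A")
      case True
      then have "{x} \<in> \<B>" unfolding \<B>_def by blast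
      then show ?thesis using xU by blast
    next
      case False
      then obtain W where W: "openin mtopology W" "x \<in> W" "W \<subseteq> U" using Ux by blast
      have "\<exists>r>0. mball x r \<subseteq> W" using W unfolding openin_mtopology by blast
      then obtain r where r: "r > 0" "mball x r \<subseteq> W" by (elim exE conjE)
      obtain m where m: "(1/2::real)^m < r/2" using half_pow_small[of "r/2"] r(1) by auto
      have xM: "x \<in> M" using xU UM by blast
      obtain B where B: "B \<in> F m" "x \<in> B" using Fcov[OF xM, of m] by (elim bexE)
      have "B \<subseteq> mball x r" by (rule small[OF B(1) B(2) xM]) (use xM m in simp)
      then have "B \<subseteq> U" using r W by blast
      moreover have "B \<in> \<B>" unfolding \<B>_def using B by blast
      ultimately show ?thesis using B by blast
    qed
  qed
  have reg: "regular_at ?T \<B> x" if xT: "x \<in> topspace ?T" and niso: "\<not> isolated_point ?T x" for x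
    unfolding regular_at_def
  proof (intro allI impI)
    fix U assume "\<exists>W. openin ?T W \<and> x \<in> W \<and> W \<subseteq> U"
    then obtain W where W: "openin ?T W" "x \<in> W" "W \<subseteq> U" by (elim exE conjE)
    have xM: "x \<in> M" using xT topT by simp
    have xA: "x \<notin> A" using niso opA xT unfolding isolated_point_def by blast
    have "x \<in> A \<or> (\<exists>W'. openin mtopology W' \<and> x \<in> W' \<and> W' \<subseteq> W)" using W(1,2) unfolding opT by blast
    then obtain W' where W': "openin mtopology W'" "x \<in> W'" "W' \<subseteq> W" using xA by blast
    have "\<exists>r>0. mball x r \<subseteq> W'" using W' unfolding openin_mtopology by blast
    then obtain r where r: "r > 0" "mball x r \<subseteq> W'" by (elim exE conjE)
    obtain m where m: "(1/2::real)^m < r/3" using half_pow_small[of "r/3"] r(1) by auto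
    have "\<forall>k. \<exists>N. openin mtopology N \<and> x \<in> N \<and> finite {W\<in>F k. W \<inter> N \<noteq> {}}"
      using Flf[OF xM] by blast
    then obtain Nf where Nf0: "\<forall>k. openin mtopology (Nf k) \<and> x \<in> Nf k \<and> finite {W\<in>F k. W \<inter> Nf k \<noteq> {}}"
      by (rule choice[THEN exE])
    have Nf: "openin mtopology (Nf k) \<and> x \<in> Nf k \<and> finite {W\<in>F k. W \<inter> Nf k \<noteq> {}}" for k
      using Nf0 by (rule spec)
    define V where "V = mball x ((1/2)^m) \<inter> \<Inter>(Nf ` {..<m})"
    have Vo: "openin mtopology V" unfolding V_def
      by (rule openin_Int_Inter) (use Nf in auto)
    have xV: "x \<in> V" unfolding V_def using xM Nf by auto
    have Vball: "V \<subseteq> mball x ((1/2)^m)" unfolding V_def by blast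
    have "mball x ((1/2)^m) \<subseteq> mball x r" using m r(1) by auto
    then have VU: "V \<subseteq> U" using Vball r W' W by blast
    have "{B\<in>\<B>. B \<inter> V \<noteq> {} \<and> \<not> B \<subseteq> U} \<subseteq> (\<Union>k<m. {W\<in>F k. W \<inter> Nf k \<noteq> {}})"
    proof
      fix B assume "B \<in> {B\<in>\<B>. B \<inter> V \<noteq> {} \<and> \<not> B \<subseteq> U}"
      then have B: "B \<in> \<B>" "B \<inter> V \<noteq> {}" "\<not> B \<subseteq> U" by auto
      then obtain y where y: "y \<in> B" "y \<in> V" by blast
      show "B \<in> (\<Union>k<m. {W\<in>F k. W \<inter> Nf k \<noteq> {}})"
      proof (cases "B \<in> {{a} | a. a \<in> A}")
        case True
        then obtain a where "B = {a}" by blast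
        then have "B \<subseteq> U" using y VU by blast
        then show ?thesis using B(3) by blast
      next
        case False
        then obtain k where k: "B \<in> F k" using B(1) unfolding \<B>_def by blast
        show ?thesis
        proof (cases "k < m")
          case True
          have "y \<in> Nf k" using y(2) True unfolding V_def by blast
          then have "B \<inter> Nf k \<noteq> {}" using y(1) by blast
          then show ?thesis using True k by blast
        next
          case False
          have "(1/2::real)^k \<le> (1/2)^m" using False by (simp add: power_decreasing)
          moreover have "d x y < (1/2)^m" using y(2) Vball by auto
          ultimately have "d x y < r - 2*(1/2)^k" using m by linarith
          then have "B \<subseteq> mball x r" by (rule small[OF k y(1) xM])
          then have "B \<subseteq> U" using r W' W by blast
          then show ?thesis using B(3) by blast
        qed
      qed
    qed
    moreover have "finite (\<Union>k<m. {W\<in>F k. W \<inter> Nf k \<noteq> {}})" using Nf by blast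
    ultimately have "finite {B\<in>\<B>. B \<inter> V \<noteq> {} \<and> \<not> B \<subseteq> U}" by (rule finite_subset)
    moreover have "openin ?T V" using opX[OF Vo] .
    ultimately show "\<exists>V. openin ?T V \<and> x \<in> V \<and> V \<subseteq> U \<and> finite {B\<in>\<B>. B \<inter> V \<noteq> {} \<and> \<not> B \<subseteq> U}"
      using xV VU by blast
  qed
  show ?thesis unfolding has_regular_base_at_nonisolated_def using base reg by blast
qed

end

theorem mainTheorem12:
  fixes X :: "'a topology" and A :: "'a set"
  assumes "metrizable_space X"
    and "A \<subseteq> topspace X"
  shows "has_regular_base_at_nonisolated (discretization X A)"
proof -
  obtain M d where Md: "Metric_space M d" and X: "X = Metric_space.mtopology M d"
    using assms(1) unfolding metrizable_space_def by (elim exE conjE)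
  have "A \<subseteq> M" using assms(2) X Metric_space.topspace_mtopology[OF Md] by simp
  then show ?thesis using Metric_space.main_disc[OF Md] X by simp
qed

end
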